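(* Let $G$ be a compact Hausdorff topological group, $p\colon E\to B$ a $G$-map of Hausdorff $G$-spaces, and suppose $E$ is $G$-contractible. If either ($B$ is $G$-connected and $E^G\neq\emptyset$) or ($p(E^H)=B^H$ for all closed subgroups $H$ of $G$), then $\mathrm{secat}_G(p)=\mathrm{cat}_G(B)$.
   Context: $X^H=\{x: hx=x\ \forall h\in H\}$; $X$ is $G$-connected if $X^H$ is path-connected for every closed subgroup $H$. A $G$-homotopy is an equivariant homotopy with trivial action on $I$. An invariant set is $G$-categorical if its inclusion is $G$-homotopic to a map into a single orbit; $\mathrm{cat}_G(X)$ is the least number of open $G$-categorical sets covering $X$; $X$ is $G$-contractible if $\mathrm{cat}_G(X)=1$. $\mathrm{secat}_G(p)$ is the least $k$ such that $B$ is covered by $k$ invariant open sets $U_i$ each admitting a $G$-map $s\colon U_i\to E$ with $ps$ $G$-homotopic to the inclusion ($\infty$ if none). *)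

theory Defs
  imports "HOL-Analysis.Analysis" "HOL-Algebra.Group"
begin

definition topological_group :: "'g monoid \<Rightarrow> 'g topology \<Rightarrow> bool" where
  "topological_group G TG \<longleftrightarrow> group G \<and> topspace TG = carrier G
     \<and> continuous_map (prod_topology TG TG) TG (\<lambda>(x,y). x \<otimes>\<^bsub>G\<^esub> y)
     \<and> continuous_map TG TG (\<lambda>x. inv\<^bsub>G\<^esub> x)"

definition compact_Hausdorff_group :: "'g monoid \<Rightarrow> 'g topology \<Rightarrow> bool" where
  "compact_Hausdorff_group G TG \<longleftrightarrow> topological_group G TG \<and> compact_space TG \<and> Hausdorff_space TG"

definition G_space :: "'g monoid \<Rightarrow> 'g topology \<Rightarrow> 'x topology \<Rightarrow> ('g \<Rightarrow> 'x \<Rightarrow> 'x) \<Rightarrow> bool" where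
  "G_space G TG X a \<longleftrightarrow> continuous_map (prod_topology TG X) X (\<lambda>(g,x). a g x)
     \<and> (\<forall>x\<in>topspace X. a \<one>\<^bsub>G\<^esub> x = x)
     \<and> (\<forall>g\<in>carrier G. \<forall>h\<in>carrier G. \<forall>x\<in>topspace X. a (g \<otimes>\<^bsub>G\<^esub> h) x = a g (a h x))"

definition equivariant :: "'g monoid \<Rightarrow> 'x topology \<Rightarrow> ('g \<Rightarrow> 'x \<Rightarrow> 'x) \<Rightarrow> ('g \<Rightarrow> 'y \<Rightarrow> 'y) \<Rightarrow> ('x \<Rightarrow> 'y) \<Rightarrow> bool" where
  "equivariant G X a b f \<longleftrightarrow> (\<forall>g\<in>carrier G. \<forall>x\<in>topspace X. f (a g x) = b g (f x))"

definition G_map :: "'g monoid \<Rightarrow> 'x topology \<Rightarrow> ('g \<Rightarrow> 'x \<Rightarrow> 'x) \<Rightarrow> 'y topology \<Rightarrow> ('g \<Rightarrow> 'y \<Rightarrow> 'y) \<Rightarrow> ('x \<Rightarrow> 'y) \<Rightarrow> bool" where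
  "G_map G X a Y b f \<longleftrightarrow> continuous_map X Y f \<and> equivariant G X a b f"

text \<open>G-homotopy: a homotopy (parameter space [0,1] with trivial action) all of whose
 stages are equivariant.\<close>
definition G_homotopic :: "'g monoid \<Rightarrow> 'x topology \<Rightarrow> ('g \<Rightarrow> 'x \<Rightarrow> 'x) \<Rightarrow> 'y topology \<Rightarrow> ('g \<Rightarrow> 'y \<Rightarrow> 'y) \<Rightarrow> ('x \<Rightarrow> 'y) \<Rightarrow> ('x \<Rightarrow> 'y) \<Rightarrow> bool" where
  "G_homotopic G X a Y b f f' \<longleftrightarrow> homotopic_with (equivariant G X a b) X Y f f'"

definition invariant_set :: "'g monoid \<Rightarrow> 'x topology \<Rightarrow> ('g \<Rightarrow> 'x \<Rightarrow> 'x) \<Rightarrow> 'x set \<Rightarrow> bool" where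
  "invariant_set G X a U \<longleftrightarrow> U \<subseteq> topspace X \<and> (\<forall>g\<in>carrier G. \<forall>x\<in>U. a g x \<in> U)"

definition G_orbit :: "'g monoid \<Rightarrow> ('g \<Rightarrow> 'x \<Rightarrow> 'x) \<Rightarrow> 'x \<Rightarrow> 'x set" where
  "G_orbit G a x = {a g x | g. g \<in> carrier G}"

definition fixed_set :: "'x topology \<Rightarrow> ('g \<Rightarrow> 'x \<Rightarrow> 'x) \<Rightarrow> 'g set \<Rightarrow> 'x set" where
  "fixed_set X a H = {x \<in> topspace X. \<forall>h\<in>H. a h x = x}"

definition closed_subgroup :: "'g monoid \<Rightarrow> 'g topology \<Rightarrow> 'g set \<Rightarrow> bool" where
  "closed_subgroup G TG H \<longleftrightarrow> subgroup H G \<and> closedin TG H"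

definition G_connected :: "'g monoid \<Rightarrow> 'g topology \<Rightarrow> 'x topology \<Rightarrow> ('g \<Rightarrow> 'x \<Rightarrow> 'x) \<Rightarrow> bool" where
  "G_connected G TG X a \<longleftrightarrow> (\<forall>H. closed_subgroup G TG H \<longrightarrow> path_connectedin X (fixed_set X a H))"

definition G_categorical :: "'g monoid \<Rightarrow> 'x topology \<Rightarrow> ('g \<Rightarrow> 'x \<Rightarrow> 'x) \<Rightarrow> 'x set \<Rightarrow> bool" where
  "G_categorical G X a U \<longleftrightarrow> invariant_set G X a U \<and>
     (\<exists>c x0. x0 \<in> topspace X \<and> c ` U \<subseteq> G_orbit G a x0 \<and>
        G_homotopic G (subtopology X U) a X a id c)"

text \<open>Equivariant LS category (\<infinity> if no finite cover exists).\<close>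
definition G_cat :: "'g monoid \<Rightarrow> 'x topology \<Rightarrow> ('g \<Rightarrow> 'x \<Rightarrow> 'x) \<Rightarrow> enat" where
  "G_cat G X a = Inf {enat k | k. \<exists>U :: nat \<Rightarrow> 'x set.
      (\<forall>i<k. openin X (U i) \<and> G_categorical G X a (U i)) \<and> topspace X = (\<Union>i<k. U i)}"

definition G_secat :: "'g monoid \<Rightarrow> 'e topology \<Rightarrow> ('g \<Rightarrow> 'e \<Rightarrow> 'e) \<Rightarrow> 'b topology \<Rightarrow> ('g \<Rightarrow> 'b \<Rightarrow> 'b) \<Rightarrow> ('e \<Rightarrow> 'b) \<Rightarrow> enat" where
  "G_secat G E aE B aB p = Inf {enat k | k. \<exists>U :: nat \<Rightarrow> 'b set.
      (\<forall>i<k. openin B (U i) \<and> invariant_set G B aB (U i) \<and>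
         (\<exists>s. G_map G (subtopology B (U i)) aB E aE s \<and>
              G_homotopic G (subtopology B (U i)) aB B aB (p \<circ> s) id))
      \<and> topspace B = (\<Union>i<k. U i)}"

end

theory Submission imports Defs begin

lemma factor_cont:
  assumes "compact_space K" "Hausdorff_space Y" "continuous_map K Y q" "q ` topspace K = topspace Y"
    "continuous_map K Z f'" "\<And>k. k \<in> topspace K \<Longrightarrow> f (q k) = f' k"
  shows "continuous_map Y Z f"
proof -
  have "quotient_map K Y q" using continuous_imp_quotient_map assms by blast
  moreover have "continuous_map K Z (f \<circ> q)" using continuous_map_eq[OF assms(5)] assms(6) by force
  ultimately show ?thesis using continuous_compose_quotient_map by blast
qed


locale GS =
  fixes G :: "'g monoid" (structure) and TG :: "'g topology"
    and E :: "'e topology" and aE :: "'g \<Rightarrow> 'e \<Rightarrow> 'e"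
    and B :: "'b topology" and aB :: "'g \<Rightarrow> 'b \<Rightarrow> 'b"
    and p :: "'e \<Rightarrow> 'b"
  assumes grp: "group G" and tg: "topspace TG = carrier G" and cpt: "compact_space TG"
    and sE: "G_space G TG E aE" and sB: "G_space G TG B aB" and hB: "Hausdorff_space B"
    and pm: "G_map G E aE B aB p"
begin

lemma act_cont_comp:
  assumes "G_space G TG X a" "continuous_map Z TG f" "continuous_map Z X g"
  shows "continuous_map Z X (\<lambda>z. a (f z) (g z))"
proof -
  have c: "continuous_map (prod_topology TG X) X (\<lambda>(g,x). a g x)" using assms(1) G_space_def by blast
  show ?thesis
  using continuous_map_compose[OF continuous_map_pairedI[OF assms(2,3)] c] by (simp add: o_def)
qed

lemma act_in:
  assumes "G_space G TG X a" "g \<in> carrier G" "x \<in> topspace X"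
  shows "a g x \<in> topspace X"
proof -
  have "continuous_map (prod_topology TG X) X (\<lambda>(g,x). a g x)" using assms(1) G_space_def by blast
  then have "(\<lambda>(g,x). a g x) (g,x) \<in> topspace X"
    by (rule continuous_map_image_subset_topspace[THEN subsetD]) (use assms tg in auto)
  then show ?thesis by simp
qed

lemma act_one: "G_space G TG X a \<Longrightarrow> x \<in> topspace X \<Longrightarrow> a \<one>\<^bsub>G\<^esub> x = x"
  unfolding G_space_def by blast

lemma act_mult: "G_space G TG X a \<Longrightarrow> g \<in> carrier G \<Longrightarrow> h \<in> carrier G \<Longrightarrow> x \<in> topspace X
   \<Longrightarrow> a (g \<otimes>\<^bsub>G\<^esub> h) x = a g (a h x)"
  unfolding G_space_def by blast

lemma stab_well:
  assumes sX: "G_space G TG X aX" and x0: "x0 \<in> topspace B" and z: "z \<in> topspace X"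
    and fx: "\<And>h. h \<in> carrier G \<Longrightarrow> aB h x0 = x0 \<Longrightarrow> aX h z = z"
    and g: "g1 \<in> carrier G" "g2 \<in> carrier G" and eq: "aB g1 x0 = aB g2 x0"
  shows "aX g1 z = aX g2 z"
proof -
  interpret group G by (rule grp)
  let ?k = "inv g1 \<otimes> g2"
  have k: "?k \<in> carrier G" using g by simp
  have "aB ?k x0 = aB (inv g1) (aB g2 x0)" using act_mult[OF sB] g x0 by simp
  also have "\<dots> = aB (inv g1) (aB g1 x0)" using eq by simp
  also have "\<dots> = aB (inv g1 \<otimes> g1) x0" using act_mult[OF sB, of "inv g1" g1 x0] g x0 by simp
  also have "\<dots> = x0" using act_one[OF sB] g x0 by simp
  finally have "aX ?k z = z" using fx k by blast
  have "g1 \<otimes> ?k = g2" using g by (simp add: m_assoc[symmetric])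
  then have "aX g2 z = aX g1 (aX ?k z)" using act_mult[OF sX] g z k by metis
  then show ?thesis using \<open>aX ?k z = z\<close> by simp
qed

definition rep :: "'b \<Rightarrow> 'b \<Rightarrow> 'g" where
  "rep x0 y = (SOME g. g \<in> carrier G \<and> aB g x0 = y)"

lemma rep_prop: "g \<in> carrier G \<Longrightarrow> rep x0 (aB g x0) \<in> carrier G \<and> aB (rep x0 (aB g x0)) x0 = aB g x0"
  unfolding rep_def by (rule someI) auto

lemma rep_act:
  assumes sX: "G_space G TG X aX" and x0: "x0 \<in> topspace B" and z: "z \<in> topspace X"
    and fx: "\<And>h. h \<in> carrier G \<Longrightarrow> aB h x0 = x0 \<Longrightarrow> aX h z = z"
    and g: "g \<in> carrier G"
  shows "aX (rep x0 (aB g x0)) z = aX g z"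
  using stab_well[OF sX x0 z fx] rep_prop[OF g] g by blast

lemma equivariant_cong:
  "equivariant G X a b f \<Longrightarrow> (\<And>x. x \<in> topspace X \<Longrightarrow> f' x = f x)
   \<Longrightarrow> (\<And>g x. g \<in> carrier G \<Longrightarrow> x \<in> topspace X \<Longrightarrow> a g x \<in> topspace X) \<Longrightarrow> equivariant G X a b f'"
  unfolding equivariant_def by auto

lemma topspace_subU: "invariant_set G B aB U \<Longrightarrow> topspace (subtopology B U) = U"
  unfolding invariant_set_def by auto

lemma sec_imp_cat:
  assumes e0: "e0 \<in> topspace E" and cEo: "cE ` topspace E \<subseteq> G_orbit G aE e0"
    and hE: "homotopic_with (equivariant G E aE aE) E E id cE"
    and inv: "invariant_set G B aB U" and sm: "G_map G (subtopology B U) aB E aE s"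
    and hs: "homotopic_with (equivariant G (subtopology B U) aB aB) (subtopology B U) B (p \<circ> s) id"
  shows "G_categorical G B aB U"
proof -
  let ?X = "subtopology B U"
  have tX: "topspace ?X = U" using topspace_subU[OF inv] .
  have sc: "continuous_map ?X E s" and se: "equivariant G ?X aB aE s" using sm unfolding G_map_def by auto
  have pc: "continuous_map E B p" and pe: "equivariant G E aE aB p" using pm unfolding G_map_def by auto
  have h1: "homotopic_with (\<lambda>j. equivariant G E aE aE j \<and> continuous_map E E j) E E id cE"
    by (rule homotopic_with_mono[OF hE]) auto
  have h2: "homotopic_with (\<lambda>j. equivariant G ?X aB aE j \<and> continuous_map ?X E j) ?X E (id \<circ> s) (cE \<circ> s)"
  proof (rule homotopic_with_compose_continuous_map_right[OF h1 sc])
    fix j assume j: "equivariant G E aE aE j \<and> continuous_map E E j"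
    show "equivariant G ?X aB aE (j \<circ> s) \<and> continuous_map ?X E (j \<circ> s)"
    proof
      show "continuous_map ?X E (j \<circ> s)" using j sc continuous_map_compose by blast
      show "equivariant G ?X aB aE (j \<circ> s)"
        unfolding equivariant_def
      proof (intro ballI)
        fix g x assume g: "g \<in> carrier G" and x: "x \<in> topspace ?X"
        have sx: "s x \<in> topspace E" using sc x continuous_map_image_subset_topspace by blast
        have "s (aB g x) = aE g (s x)" using se g x equivariant_def by metis
        then show "(j \<circ> s) (aB g x) = aE g ((j \<circ> s) x)" using j g sx equivariant_def by (metis comp_apply)
      qed
    qed
  qed
  have h3: "homotopic_with (equivariant G ?X aB aB) ?X B (p \<circ> (id \<circ> s)) (p \<circ> (cE \<circ> s))"
  proof (rule homotopic_with_compose_continuous_map_left[OF h2 pc])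
    fix j assume j: "equivariant G ?X aB aE j \<and> continuous_map ?X E j"
    show "equivariant G ?X aB aB (p \<circ> j)"
      unfolding equivariant_def
    proof (intro ballI)
      fix g x assume g: "g \<in> carrier G" and x: "x \<in> topspace ?X"
      have jx: "j x \<in> topspace E" using j x continuous_map_image_subset_topspace by blast
      have "j (aB g x) = aE g (j x)" using j g x equivariant_def by metis
      then show "(p \<circ> j) (aB g x) = aB g ((p \<circ> j) x)" using pe g jx equivariant_def by (metis comp_apply)
    qed
  qed
  have h4: "homotopic_with (equivariant G ?X aB aB) ?X B id (p \<circ> (cE \<circ> s))"
    using homotopic_with_trans[OF homotopic_with_symD[OF hs]] h3 by (simp add: o_assoc)
  have img: "(p \<circ> (cE \<circ> s)) ` U \<subseteq> G_orbit G aB (p e0)"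
  proof
    fix y assume "y \<in> (p \<circ> (cE \<circ> s)) ` U"
    then obtain u where u: "u \<in> U" and y: "y = p (cE (s u))" by auto
    have "s u \<in> topspace E" using sc u tX continuous_map_image_subset_topspace by blast
    then have "cE (s u) \<in> G_orbit G aE e0" using cEo by blast
    then obtain g where g: "g \<in> carrier G" and eq: "cE (s u) = aE g e0" unfolding G_orbit_def by auto
    have "p (aE g e0) = aB g (p e0)" using pe g e0 equivariant_def by metis
    then show "y \<in> G_orbit G aB (p e0)" using y eq g unfolding G_orbit_def by auto
  qed
  have "p e0 \<in> topspace B" using pc e0 continuous_map_image_subset_topspace by blast
  then show ?thesis unfolding G_categorical_def G_homotopic_def using inv img h4 by blast
qed

lemma orbit_cont: "x0 \<in> topspace B \<Longrightarrow> continuous_map TG B (\<lambda>g. aB g x0)"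
  using act_cont_comp[OF sB continuous_map_id continuous_map_const[THEN iffD2]] by auto

lemma stab_closed:
  assumes x0: "x0 \<in> topspace B"
  shows "closed_subgroup G TG {g \<in> carrier G. aB g x0 = x0}"
proof -
  interpret group G by (rule grp)
  have "subgroup {g \<in> carrier G. aB g x0 = x0} G"
  proof (rule subgroup.intro)
    show "{g \<in> carrier G. aB g x0 = x0} \<subseteq> carrier G" by auto
    show "\<one> \<in> {g \<in> carrier G. aB g x0 = x0}" using act_one[OF sB x0] by simp
  next
    fix x y assume x: "x \<in> {g \<in> carrier G. aB g x0 = x0}" and y: "y \<in> {g \<in> carrier G. aB g x0 = x0}"
    have xc: "x \<in> carrier G" and xa: "aB x x0 = x0" using x by auto
    have yc: "y \<in> carrier G" and ya: "aB y x0 = x0" using y by auto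
    have "aB (x \<otimes> y) x0 = aB x (aB y x0)" by (rule act_mult[OF sB xc yc x0])
    then have "aB (x \<otimes> y) x0 = x0" using xa ya by simp
    then show "x \<otimes> y \<in> {g \<in> carrier G. aB g x0 = x0}" using xc yc by simp
  next
    fix x assume x: "x \<in> {g \<in> carrier G. aB g x0 = x0}"
    have xc: "x \<in> carrier G" and xa: "aB x x0 = x0" using x by auto
    have ic: "inv x \<in> carrier G" using xc by simp
    have "aB (inv x \<otimes> x) x0 = aB (inv x) (aB x x0)" by (rule act_mult[OF sB ic xc x0])
    moreover have "inv x \<otimes> x = \<one>" using xc by simp
    ultimately have "aB (inv x) x0 = x0" using xa act_one[OF sB x0] by simp
    then show "inv x \<in> {g \<in> carrier G. aB g x0 = x0}" using ic by simp
  qed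
  moreover have "closedin TG {g \<in> carrier G. aB g x0 = x0}"
  proof -
    have "closedin TG {g \<in> topspace TG. aB g x0 \<in> {x0}}"
      by (rule closedin_continuous_map_preimage[OF orbit_cont[OF x0]
           closedin_t1_singleton[OF Hausdorff_imp_t1_space[OF hB] x0]])
    then show ?thesis using tg by simp
  qed
  ultimately show ?thesis unfolding closed_subgroup_def by (rule conjI)
qed

lemma cat_data:
  assumes cat: "G_categorical G B aB U"
  obtains c x0 where "invariant_set G B aB U" "x0 \<in> topspace B" "c ` U \<subseteq> G_orbit G aB x0"
    "homotopic_with (equivariant G (subtopology B U) aB aB) (subtopology B U) B id c"
    "continuous_map (subtopology B U) B c" "equivariant G (subtopology B U) aB aB c"
proof -
  from cat obtain c x0 where a: "invariant_set G B aB U" "x0 \<in> topspace B" "c ` U \<subseteq> G_orbit G aB x0"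
    "homotopic_with (equivariant G (subtopology B U) aB aB) (subtopology B U) B id c"
    unfolding G_categorical_def G_homotopic_def by blast
  have "continuous_map (subtopology B U) B c" using homotopic_with_imp_continuous_maps[OF a(4)] by blast
  moreover have "equivariant G (subtopology B U) aB aB c" using homotopic_with_imp_property[OF a(4)] by blast
  ultimately show ?thesis using a that by blast
qed

lemma orbit_sub: "x0 \<in> topspace B \<Longrightarrow> G_orbit G aB x0 \<subseteq> topspace B"
  unfolding G_orbit_def using act_in[OF sB] by auto

lemma cat_imp_sec_b:
  assumes condb: "\<forall>H. closed_subgroup G TG H \<longrightarrow> p ` fixed_set E aE H = fixed_set B aB H"
    and cat: "G_categorical G B aB U"
  shows "\<exists>s. G_map G (subtopology B U) aB E aE s \<and> G_homotopic G (subtopology B U) aB B aB (p \<circ> s) id"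
proof -
  interpret group G by (rule grp)
  obtain c x0 where inv: "invariant_set G B aB U" and x0: "x0 \<in> topspace B"
    and co: "c ` U \<subseteq> G_orbit G aB x0"
    and hc: "homotopic_with (equivariant G (subtopology B U) aB aB) (subtopology B U) B id c"
    and cc: "continuous_map (subtopology B U) B c" and ce: "equivariant G (subtopology B U) aB aB c"
    by (rule cat_data[OF cat])
  let ?X = "subtopology B U"
  have tX: "topspace ?X = U" using topspace_subU[OF inv] .
  let ?H = "{g \<in> carrier G. aB g x0 = x0}"
  have "x0 \<in> fixed_set B aB ?H" using x0 unfolding fixed_set_def by auto
  moreover have "p ` fixed_set E aE ?H = fixed_set B aB ?H" using condb stab_closed[OF x0] by blast
  ultimately have "x0 \<in> p ` fixed_set E aE ?H" by simp
  then obtain y0 where py0': "x0 = p y0" and y0: "y0 \<in> fixed_set E aE ?H"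
    by (rule imageE)
  have py0: "p y0 = x0" using py0' by simp
  have y0t: "y0 \<in> topspace E" using y0 unfolding fixed_set_def by auto
  have pc: "continuous_map E B p" and pe: "equivariant G E aE aB p" using pm unfolding G_map_def by auto
  define phi where "phi y = aE (rep x0 y) y0" for y
  have phi: "phi (aB g x0) = aE g y0" if "g \<in> carrier G" for g
    unfolding phi_def by (rule rep_act[OF sE x0 y0t _ that]) (use y0 in \<open>auto simp: fixed_set_def\<close>)
  let ?Y = "subtopology B (G_orbit G aB x0)"
  have tY: "topspace ?Y = G_orbit G aB x0" using orbit_sub[OF x0] by auto
  have phic: "continuous_map ?Y E phi"
  proof (rule factor_cont[where K=TG and q="\<lambda>g. aB g x0" and f'="\<lambda>g. aE g y0"])
    show "compact_space TG" by (rule cpt)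
    show "Hausdorff_space ?Y" using hB Hausdorff_space_subtopology by blast
    show "continuous_map TG ?Y (\<lambda>g. aB g x0)"
      using orbit_cont[OF x0] by (auto simp: continuous_map_in_subtopology G_orbit_def tg)
    show "(\<lambda>g. aB g x0) ` topspace TG = topspace ?Y" using tY tg by (auto simp: G_orbit_def)
    show "continuous_map TG E (\<lambda>g. aE g y0)"
      using act_cont_comp[OF sE continuous_map_id continuous_map_const[THEN iffD2]] y0t by auto
    show "phi (aB k x0) = aE k y0" if "k \<in> topspace TG" for k using phi that tg by auto
  qed
  have ccY: "continuous_map ?X ?Y c" using cc co tX by (auto simp: continuous_map_in_subtopology)
  define s where "s = phi \<circ> c"
  have sc: "continuous_map ?X E s" unfolding s_def using ccY phic continuous_map_compose by blast
  have corb: "\<exists>k\<in>carrier G. c u = aB k x0" if "u \<in> U" for u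
    using co that unfolding G_orbit_def by auto
  have se: "equivariant G ?X aB aE s"
    unfolding equivariant_def
  proof (intro ballI)
    fix g u assume g: "g \<in> carrier G" and u: "u \<in> topspace ?X"
    have uU: "u \<in> U" using u tX by simp
    obtain k where k: "k \<in> carrier G" "c u = aB k x0" using corb[OF uU] by blast
    have "c (aB g u) = aB g (c u)" using ce g u equivariant_def by metis
    also have "\<dots> = aB (g \<otimes> k) x0" using k g x0 act_mult[OF sB] by simp
    finally have "s (aB g u) = phi (aB (g \<otimes> k) x0)" unfolding s_def by simp
    also have "\<dots> = aE (g \<otimes> k) y0" using phi[of "g \<otimes> k"] g k(1) by simp
    also have "\<dots> = aE g (aE k y0)" by (rule act_mult[OF sE g k(1) y0t])
    finally have 1: "s (aB g u) = aE g (aE k y0)" .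
    have 2: "aE k y0 = s u" unfolding s_def using phi[OF k(1)] k(2) by simp
    show "s (aB g u) = aE g (s u)" using 1 2 by simp
  qed
  have psc: "(p \<circ> s) u = c u" if "u \<in> topspace ?X" for u
  proof -
    have uU: "u \<in> U" using that tX by simp
    obtain k where k: "k \<in> carrier G" "c u = aB k x0" using corb[OF uU] by blast
    have "(p \<circ> s) u = p (aE k y0)" unfolding s_def using phi[OF k(1)] k(2) by simp
    also have "\<dots> = aB k (p y0)" using pe k(1) y0t unfolding equivariant_def by blast
    also have "\<dots> = aB k x0" using py0 by simp
    finally show ?thesis using k by simp
  qed
  have "homotopic_with (equivariant G ?X aB aB) ?X B (p \<circ> s) c"
  proof (rule homotopic_with_equal)
    show "equivariant G ?X aB aB c" by (rule ce)
    show "equivariant G ?X aB aB (p \<circ> s)"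
      by (rule equivariant_cong[OF ce psc]) (use inv tX in \<open>auto simp: invariant_set_def\<close>)
    show "continuous_map ?X B (p \<circ> s)" using sc pc continuous_map_compose by blast
    show "(p \<circ> s) x = c x" if "x \<in> topspace ?X" for x using psc that .
  qed
  then have "homotopic_with (equivariant G ?X aB aB) ?X B (p \<circ> s) id"
    by (rule homotopic_with_trans[OF _ homotopic_with_symD[OF hc]])
  then show ?thesis using sc se unfolding G_map_def G_homotopic_def by blast
qed

lemma cat_imp_sec_a:
  assumes gc: "G_connected G TG B aB" and ne: "fixed_set E aE (carrier G) \<noteq> {}"
    and cat: "G_categorical G B aB U"
  shows "\<exists>s. G_map G (subtopology B U) aB E aE s \<and> G_homotopic G (subtopology B U) aB B aB (p \<circ> s) id"
proof -
  interpret group G by (rule grp)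
  obtain c x0 where inv: "invariant_set G B aB U" and x0: "x0 \<in> topspace B"
    and co: "c ` U \<subseteq> G_orbit G aB x0"
    and hc: "homotopic_with (equivariant G (subtopology B U) aB aB) (subtopology B U) B id c"
    and cc: "continuous_map (subtopology B U) B c" and ce: "equivariant G (subtopology B U) aB aB c"
    by (rule cat_data[OF cat])
  let ?X = "subtopology B U"
  let ?I = "top_of_set {0..1::real}"
  have tX: "topspace ?X = U" using topspace_subU[OF inv] .
  obtain e0 where e0: "e0 \<in> fixed_set E aE (carrier G)" using ne by blast
  have e0t: "e0 \<in> topspace E" and e0f: "\<And>g. g \<in> carrier G \<Longrightarrow> aE g e0 = e0"
    using e0 unfolding fixed_set_def by auto
  have pc: "continuous_map E B p" and pe: "equivariant G E aE aB p" using pm unfolding G_map_def by auto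
  define b0 where "b0 = p e0"
  have b0t: "b0 \<in> topspace B" unfolding b0_def using pc e0t continuous_map_image_subset_topspace by blast
  have b0f: "aB g b0 = b0" if g: "g \<in> carrier G" for g
  proof -
    have "p (aE g e0) = aB g (p e0)" using pe g e0t unfolding equivariant_def by blast
    then show ?thesis unfolding b0_def using e0f[OF g] by simp
  qed
  let ?H = "{g \<in> carrier G. aB g x0 = x0}"
  have pcH: "path_connectedin B (fixed_set B aB ?H)"
    using gc stab_closed[OF x0] unfolding G_connected_def by blast
  have x0H: "x0 \<in> fixed_set B aB ?H" using x0 unfolding fixed_set_def by auto
  have b0H: "b0 \<in> fixed_set B aB ?H" using b0t b0f unfolding fixed_set_def by auto
  obtain gam where gp: "pathin B gam" and gH: "gam \<in> {0..1} \<rightarrow> fixed_set B aB ?H"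
      and g0: "gam 0 = x0" and g1: "gam 1 = b0"
    using pcH x0H b0H unfolding path_connectedin by blast
  have gt: "gam t \<in> topspace B" if "t \<in> {0..1}" for t
    using gH that unfolding fixed_set_def by auto
  have gfix: "aB h (gam t) = gam t" if "t \<in> {0..1}" "h \<in> carrier G" "aB h x0 = x0" for t h
    using gH that unfolding fixed_set_def by auto
  define Psi where "Psi z = aB (rep x0 (snd z)) (gam (fst z))" for z
  have PsiA: "Psi (t, aB g x0) = aB g (gam t)" if t: "t \<in> {0..1}" and g: "g \<in> carrier G" for t g
    unfolding Psi_def using rep_act[OF sB x0 gt[OF t] gfix[OF t] g] by simp
  let ?Y = "subtopology B (G_orbit G aB x0)"
  have tY: "topspace ?Y = G_orbit G aB x0" using orbit_sub[OF x0] by auto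
  have Psic: "continuous_map (prod_topology ?I ?Y) B Psi"
  proof (rule factor_cont[where K="prod_topology ?I TG" and q="\<lambda>z. (fst z, aB (snd z) x0)"
        and f'="\<lambda>z. aB (snd z) (gam (fst z))"])
    have cI: "compact_space ?I" by (simp add: compact_space_def compactin_subtopology)
    show "compact_space (prod_topology ?I TG)" using cI cpt compact_space_prod_topology by blast
    have hI: "Hausdorff_space ?I" using Hausdorff_space_subtopology Hausdorff_space_euclidean by blast
    have hY: "Hausdorff_space ?Y" using hB Hausdorff_space_subtopology by blast
    show "Hausdorff_space (prod_topology ?I ?Y)" using hI hY Hausdorff_space_prod_topology by blast
    have oc: "continuous_map (prod_topology ?I TG) B (\<lambda>z. aB (snd z) x0)"
      using act_cont_comp[OF sB continuous_map_snd continuous_map_const[THEN iffD2]] x0 by auto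
    have oY: "continuous_map (prod_topology ?I TG) ?Y (\<lambda>z. aB (snd z) x0)"
      using oc by (auto simp: continuous_map_in_subtopology G_orbit_def tg)
    show "continuous_map (prod_topology ?I TG) (prod_topology ?I ?Y) (\<lambda>z. (fst z, aB (snd z) x0))"
      by (rule continuous_map_pairedI[OF continuous_map_fst oY])
    show "(\<lambda>z. (fst z, aB (snd z) x0)) ` topspace (prod_topology ?I TG) = topspace (prod_topology ?I ?Y)"
    proof -
      have "(\<lambda>z. (fst z, aB (snd z) x0)) ` ({0..1::real} \<times> carrier G) = {0..1::real} \<times> G_orbit G aB x0"
      proof
        show "(\<lambda>z. (fst z, aB (snd z) x0)) ` ({0..1::real} \<times> carrier G) \<subseteq> {0..1::real} \<times> G_orbit G aB x0"
          unfolding G_orbit_def by auto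
        show "{0..1::real} \<times> G_orbit G aB x0 \<subseteq> (\<lambda>z. (fst z, aB (snd z) x0)) ` ({0..1::real} \<times> carrier G)"
        proof
          fix z assume "z \<in> {0..1::real} \<times> G_orbit G aB x0"
          then obtain t g where t: "t \<in> {0..1}" and g: "g \<in> carrier G" and z: "z = (t, aB g x0)"
            unfolding G_orbit_def by auto
          show "z \<in> (\<lambda>z. (fst z, aB (snd z) x0)) ` ({0..1::real} \<times> carrier G)"
            by (rule image_eqI[where x="(t,g)"]) (use t g z in auto)
        qed
      qed
      then show ?thesis using tY tg by simp
    qed
    have gc': "continuous_map (prod_topology ?I TG) B (\<lambda>z. gam (fst z))"
      using continuous_map_compose[OF continuous_map_fst gp[unfolded pathin_def]] by (simp add: o_def)
    show "continuous_map (prod_topology ?I TG) B (\<lambda>z. aB (snd z) (gam (fst z)))"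
      by (rule act_cont_comp[OF sB continuous_map_snd gc'])
    show "Psi (fst k, aB (snd k) x0) = aB (snd k) (gam (fst k))" if "k \<in> topspace (prod_topology ?I TG)" for k
      using that PsiA tg by auto
  qed
  have corb: "\<exists>k\<in>carrier G. c u = aB k x0" if "u \<in> U" for u
    using co that unfolding G_orbit_def by auto
  have ccY: "continuous_map ?X ?Y c" using cc co tX by (auto simp: continuous_map_in_subtopology)
  have h0c: "continuous_map (prod_topology ?I ?X) B (\<lambda>z. Psi (fst z, c (snd z)))"
  proof -
    have "continuous_map (prod_topology ?I ?X) (prod_topology ?I ?Y) (\<lambda>z. (fst z, c (snd z)))"
      using continuous_map_pairedI[OF continuous_map_fst continuous_map_compose[OF continuous_map_snd ccY]]
      by (simp add: o_def)
    from continuous_map_compose[OF this Psic] show ?thesis by (simp add: o_def)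
  qed
  have Psic_eq: "Psi (t, c u) = aB k (gam t)" if "t \<in> {0..1}" "u \<in> U" "k \<in> carrier G" "c u = aB k x0" for t u k
    using PsiA that by simp
  define h where "h z = (if fst z = 0 then c (snd z) else if fst z = 1 then b0 else Psi (fst z, c (snd z)))" for z
  have hcont: "continuous_map (prod_topology ?I ?X) B h"
  proof (rule continuous_map_eq[OF h0c])
    fix z assume z: "z \<in> topspace (prod_topology ?I ?X)"
    then have zz: "fst z \<in> {0..1} \<and> snd z \<in> topspace ?X" by (simp add: mem_Times_iff)
    then have t: "fst z \<in> {0..1}" by (rule conjunct1)
    have u: "snd z \<in> U" using zz tX by simp
    obtain k where k: "k \<in> carrier G" "c (snd z) = aB k x0" using corb[OF u] by blast
    have e: "Psi (fst z, c (snd z)) = aB k (gam (fst z))" by (rule Psic_eq[OF t u k])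
    show "Psi (fst z, c (snd z)) = h z"
    proof (cases "fst z = 0")
      case True then show ?thesis using e g0 k unfolding h_def by simp
    next
      case False then show ?thesis using e g1 k b0f unfolding h_def by simp
    qed
  qed
  have hce: "homotopic_with (equivariant G ?X aB aB) ?X B c (\<lambda>_. b0)"
    unfolding homotopic_with_def
  proof (intro exI conjI allI ballI)
    show "continuous_map (prod_topology ?I ?X) B h" by (rule hcont)
    show "h (0, x) = c x" for x unfolding h_def by simp
    show "h (1, x) = b0" for x unfolding h_def by simp
    fix t :: real assume t: "t \<in> {0..1}"
    show "equivariant G ?X aB aB (\<lambda>x. h (t, x))"
      unfolding equivariant_def
    proof (intro ballI)
      fix g u assume g: "g \<in> carrier G" and u': "u \<in> topspace ?X"
      have u: "u \<in> U" using u' tX by simp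
      have gu: "aB g u \<in> U" using inv g u unfolding invariant_set_def by blast
      obtain k where k: "k \<in> carrier G" "c u = aB k x0" using corb[OF u] by blast
      have cg: "c (aB g u) = aB g (c u)" using ce g u' unfolding equivariant_def by blast
      have gk: "c (aB g u) = aB (g \<otimes> k) x0" using cg k act_mult[OF sB g k(1) x0] by simp
      have gkc: "g \<otimes> k \<in> carrier G" using g k(1) by simp
      show "h (t, aB g u) = aB g (h (t, u))"
      proof (cases "t = 0")
        case True then show ?thesis unfolding h_def using cg by simp
      next
        case f0: False
        show ?thesis
        proof (cases "t = 1")
          case True then show ?thesis unfolding h_def using b0f[OF g] f0 by simp
        next
          case False
          have "h (t, aB g u) = aB (g \<otimes> k) (gam t)"
            unfolding h_def using f0 False Psic_eq[OF t gu gkc gk] by simp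
          also have "\<dots> = aB g (aB k (gam t))" by (rule act_mult[OF sB g k(1) gt[OF t]])
          also have "aB k (gam t) = h (t, u)"
            unfolding h_def using f0 False Psic_eq[OF t u k] by simp
          finally show ?thesis .
        qed
      qed
    qed
  qed
  have "homotopic_with (equivariant G ?X aB aB) ?X B id (\<lambda>_. b0)"
    by (rule homotopic_with_trans[OF hc hce])
  then have hh: "homotopic_with (equivariant G ?X aB aB) ?X B (p \<circ> (\<lambda>_. e0)) id"
    using homotopic_with_symD unfolding b0_def by (simp add: o_def)
  have sm: "G_map G ?X aB E aE (\<lambda>_. e0)"
    unfolding G_map_def equivariant_def using e0t e0f by auto
  show ?thesis using sm hh unfolding G_homotopic_def by blast
qed

end

lemma Inf_enat_mem: "(A :: enat set) \<noteq> {} \<Longrightarrow> Inf A \<in> A"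
  unfolding Inf_enat_def by (auto intro: LeastI_ex)

theorem corollary4p7:
  fixes G :: "'g monoid" and TG :: "'g topology"
    and E :: "'e topology" and aE :: "'g \<Rightarrow> 'e \<Rightarrow> 'e"
    and B :: "'b topology" and aB :: "'g \<Rightarrow> 'b \<Rightarrow> 'b"
    and p :: "'e \<Rightarrow> 'b"
  assumes "compact_Hausdorff_group G TG"
    and "G_space G TG E aE" and "Hausdorff_space E"
    and "G_space G TG B aB" and "Hausdorff_space B"
    and "G_map G E aE B aB p"
    and "G_cat G E aE = 1"
    and "(G_connected G TG B aB \<and> fixed_set E aE (carrier G) \<noteq> {})
         \<or> (\<forall>H. closed_subgroup G TG H \<longrightarrow> p ` fixed_set E aE H = fixed_set B aB H)"
  shows "G_secat G E aE B aB p = G_cat G B aB"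
proof -
  have ch: "group G" "topspace TG = carrier G" "compact_space TG"
    using assms(1) unfolding compact_Hausdorff_group_def topological_group_def by auto
  interpret GS G TG E aE B aB p
    by (rule GS.intro) (use ch assms in auto)
  define S where "S = {enat k | k. \<exists>U :: nat \<Rightarrow> 'e set.
      (\<forall>i<k. openin E (U i) \<and> G_categorical G E aE (U i)) \<and> topspace E = (\<Union>i<k. U i)}"
  have IS: "Inf S = 1" using assms(7) unfolding G_cat_def S_def by simp
  have Sne: "S \<noteq> {}"
  proof
    assume "S = {}"
    then have "Inf S = \<infinity>" by (simp add: top_enat_def[symmetric])
    then show False using IS by simp
  qed
  have "Inf S \<in> S" by (rule Inf_enat_mem[OF Sne])
  then have "enat 1 \<in> S" using IS by (simp add: one_enat_def)
  then obtain U0 :: "nat \<Rightarrow> 'e set" where U0: "G_categorical G E aE (U0 0)" and U0t: "topspace E = U0 0"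
    unfolding S_def by auto
  obtain cE e0 where e0: "e0 \<in> topspace E" and cEo: "cE ` U0 0 \<subseteq> G_orbit G aE e0"
    and hE': "G_homotopic G (subtopology E (U0 0)) aE E aE id cE"
    using U0 unfolding G_categorical_def by blast
  have hE: "homotopic_with (equivariant G E aE aE) E E id cE"
    using hE' unfolding G_homotopic_def U0t[symmetric] by simp
  have cEo': "cE ` topspace E \<subseteq> G_orbit G aE e0" using cEo U0t by simp
  have key: "(openin B V \<and> invariant_set G B aB V \<and>
         (\<exists>s. G_map G (subtopology B V) aB E aE s \<and>
              G_homotopic G (subtopology B V) aB B aB (p \<circ> s) id))
     \<longleftrightarrow> (openin B V \<and> G_categorical G B aB V)" for V
  proof
    assume a: "openin B V \<and> invariant_set G B aB V \<and>
         (\<exists>s. G_map G (subtopology B V) aB E aE s \<and>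
              G_homotopic G (subtopology B V) aB B aB (p \<circ> s) id)"
    then obtain s where "G_map G (subtopology B V) aB E aE s"
      "G_homotopic G (subtopology B V) aB B aB (p \<circ> s) id" by blast
    then have "G_categorical G B aB V"
      using sec_imp_cat[OF e0 cEo' hE] a unfolding G_homotopic_def by blast
    then show "openin B V \<and> G_categorical G B aB V" using a by blast
  next
    assume a: "openin B V \<and> G_categorical G B aB V"
    then have "\<exists>s. G_map G (subtopology B V) aB E aE s \<and>
              G_homotopic G (subtopology B V) aB B aB (p \<circ> s) id"
      using assms(8) cat_imp_sec_a cat_imp_sec_b by blast
    moreover have "invariant_set G B aB V" using a unfolding G_categorical_def by blast
    ultimately show "openin B V \<and> invariant_set G B aB V \<and>
         (\<exists>s. G_map G (subtopology B V) aB E aE s \<and>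
              G_homotopic G (subtopology B V) aB B aB (p \<circ> s) id)" using a by blast
  qed
  show ?thesis unfolding G_secat_def G_cat_def key ..
qed

end
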